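(* Let $(M,g)$ be an $n$-dimensional pseudo-Riemannian manifold and $K=\alpha v+\beta h$ a symmetric 2-tensor of type $p+q$. Then $K$ is a Killing tensor if and only if: (i) the eigenstructure $(V,H)$ is umbilical, i.e. $S_v=\frac12 v\otimes\mathbf a$ and $S_h=\frac12 h\otimes\mathbf b$ for vector fields $\mathbf a,\mathbf b$ (so $\operatorname{Tr}S_v=\frac p2\mathbf a$, $\operatorname{Tr}S_h=\frac q2\mathbf b$); and (ii) $\mathbf a=\frac{1}{\beta-\alpha}\mathrm d\alpha$ and $\mathbf b=\frac1{\alpha-\beta}\mathrm d\beta$.
   Context: Type $p+q$: $V$ is a rank-$p$ distribution on which $g$ is nondegenerate, $H=V^\perp$ (rank $q=n-p$), $v,h$ the orthogonal projectors onto $V,H$ (as covariant 2-tensors via $g$, $g=v+h$), and $\alpha\neq\beta$ are functions. Vectors and 1-forms are identified via $g$. Generalized second fundamental forms: $Q_v(x,y)=h(\nabla_{v(x)}v(y))$, $Q_h(x,y)=v(\nabla_{h(x)}h(y))$, with symmetric parts $S_v,S_h$; $(v\otimes\mathbf a)(x,y)=g(vx,vy)\mathbf a$; $\operatorname{Tr}$ is the $g$-trace over the two arguments. A Killing tensor satisfies $\nabla_{(a}K_{bc)}=0$. *)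

theory Defs
  imports "HOL-Analysis.Analysis"
begin

text \<open>Local coordinate model. The manifold is (a coordinate chart) an open set
U of real^'n; tensors are expressed in coordinates. A covariant 2-tensor field
is a matrix field A, acting as bilin A u w = u . (A w). The metric is the matrix
field G. An endomorphism field (e.g. the projector v) is a matrix field acting by *v.\<close>

definition bilin :: "real^'n^'n \<Rightarrow> real^'n \<Rightarrow> real^'n \<Rightarrow> real" where
  "bilin A u w = u \<bullet> (A *v w)"

text \<open>Directional derivative of a field F at x in direction w.\<close>
definition ddir :: "(real^'n \<Rightarrow> 'b::real_normed_vector) \<Rightarrow> real^'n \<Rightarrow> real^'n \<Rightarrow> 'b" where
  "ddir F x w = frechet_derivative F (at x) w"

text \<open>Levi-Civita connection of G via the Koszul formula:
 g(Gamma(X,Y),W) = 1/2 (dg[X](Y,W) + dg[Y](X,W) - dg[W](X,Y)).\<close>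
definition christoffel :: "(real^'n \<Rightarrow> real^'n^'n) \<Rightarrow> real^'n \<Rightarrow> real^'n \<Rightarrow> real^'n \<Rightarrow> real^'n" where
  "christoffel G x X Y = matrix_inv (G x) *v (\<chi> l. (1/2) *
      (bilin (ddir G x X) Y (axis l 1) + bilin (ddir G x Y) X (axis l 1)
       - bilin (ddir G x (axis l 1)) X Y))"

text \<open>Covariant derivative nabla_X Y at x of a vector field Yf.\<close>
definition cov_vf :: "(real^'n \<Rightarrow> real^'n^'n) \<Rightarrow> real^'n \<Rightarrow> real^'n \<Rightarrow> (real^'n \<Rightarrow> real^'n) \<Rightarrow> real^'n" where
  "cov_vf G x X Yf = ddir Yf x X + christoffel G x X (Yf x)"

text \<open>(nabla_X K)(Y,Z) at x for a covariant 2-tensor field K.\<close>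
definition cov_t2 :: "(real^'n \<Rightarrow> real^'n^'n) \<Rightarrow> (real^'n \<Rightarrow> real^'n^'n) \<Rightarrow> real^'n
     \<Rightarrow> real^'n \<Rightarrow> real^'n \<Rightarrow> real^'n \<Rightarrow> real" where
  "cov_t2 G K x X Y Z = bilin (ddir K x X) Y Z
      - bilin (K x) (christoffel G x X Y) Z - bilin (K x) Y (christoffel G x X Z)"

text \<open>Killing tensor on U: the full symmetrization of nabla_a K_bc vanishes.\<close>
definition killing :: "(real^'n \<Rightarrow> real^'n^'n) \<Rightarrow> (real^'n \<Rightarrow> real^'n^'n) \<Rightarrow> (real^'n) set \<Rightarrow> bool" where
  "killing G K U \<longleftrightarrow> (\<forall>x\<in>U. \<forall>X Y Z.
      cov_t2 G K x X Y Z + cov_t2 G K x X Z Y + cov_t2 G K x Y X Z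
    + cov_t2 G K x Y Z X + cov_t2 G K x Z X Y + cov_t2 G K x Z Y X = 0)"

text \<open>Metric g, and projectors v (matrix field P as endomorphism) and h = 1 - P.\<close>
definition ginner :: "(real^'n \<Rightarrow> real^'n^'n) \<Rightarrow> real^'n \<Rightarrow> real^'n \<Rightarrow> real^'n \<Rightarrow> real" where
  "ginner G x u w = bilin (G x) u w"

definition hproj :: "(real^'n \<Rightarrow> real^'n^'n) \<Rightarrow> real^'n \<Rightarrow> real^'n^'n" where
  "hproj P x = mat 1 - P x"

text \<open>v and h as covariant 2-tensors (lowered with g).\<close>
definition vtens :: "(real^'n \<Rightarrow> real^'n^'n) \<Rightarrow> (real^'n \<Rightarrow> real^'n^'n) \<Rightarrow> real^'n \<Rightarrow> real^'n^'n" where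
  "vtens G P x = G x ** P x"

definition htens :: "(real^'n \<Rightarrow> real^'n^'n) \<Rightarrow> (real^'n \<Rightarrow> real^'n^'n) \<Rightarrow> real^'n \<Rightarrow> real^'n^'n" where
  "htens G P x = G x ** hproj P x"

text \<open>Generalized second fundamental forms Q_v(x,y) = h(nabla_{v x} v y),
 Q_h(x,y) = v(nabla_{h x} h y) (tensorial; evaluated with x,y extended
 as constant coordinate fields), and their symmetric parts.\<close>
definition Qv where
  "Qv G P x X Y = hproj P x *v cov_vf G x (P x *v X) (\<lambda>z. P z *v Y)"

definition Qh where
  "Qh G P x X Y = P x *v cov_vf G x (hproj P x *v X) (\<lambda>z. hproj P z *v Y)"

definition Sv where
  "Sv G P x X Y = (1/2) *\<^sub>R (Qv G P x X Y + Qv G P x Y X)"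

definition Sh where
  "Sh G P x X Y = (1/2) *\<^sub>R (Qh G P x X Y + Qh G P x Y X)"

text \<open>Gradient of f (d f identified with a vector via g).\<close>
definition grad :: "(real^'n \<Rightarrow> real^'n^'n) \<Rightarrow> (real^'n \<Rightarrow> real) \<Rightarrow> real^'n \<Rightarrow> real^'n" where
  "grad G f x = matrix_inv (G x) *v (\<chi> i. ddir f x (axis i 1))"

end

theory Submission
  imports Defs
begin


lemma mm_bbl: "bounded_bilinear ((**) :: real^'n^'n \<Rightarrow> real^'n^'n \<Rightarrow> real^'n^'n)"
proof -
  have "bilinear ((**) :: real^'n^'n \<Rightarrow> real^'n^'n \<Rightarrow> real^'n^'n)"
    unfolding bilinear_def
    by (auto intro!: linearI simp: matrix_matrix_mult_def vec_eq_iff sum_distrib_left algebra_simps sum.distrib)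
  then show ?thesis using bilinear_conv_bounded_bilinear by blast
qed

lemma transpose_bl: "bounded_linear (transpose :: real^'n^'n \<Rightarrow> real^'n^'n)"
  unfolding linear_conv_bounded_linear[symmetric]
  by (auto intro!: linearI simp: transpose_def vec_eq_iff)

lemma mv_bl: "bounded_linear (\<lambda>A::real^'n^'n. A *v Y)"
  unfolding linear_conv_bounded_linear[symmetric]
  by (auto intro!: linearI simp: matrix_vector_mult_def vec_eq_iff sum_distrib_left algebra_simps sum.distrib)



lemma polar:
  fixes L :: "'v::ab_group_add \<Rightarrow> real" and Q :: "'v \<Rightarrow> 'v \<Rightarrow> real"
  assumes Qsym: "\<And>X Y. Q X Y = Q Y X" and Qadd: "\<And>X Y Z. Q (X+Y) Z = Q X Z + Q Y Z"
    and H: "\<And>X Y Z. L X * Q Y Z + L Y * Q X Z + L Z * Q X Y = 0"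
  shows "L Z * Q X Y = 0"
proof (cases "L Z = 0")
  case True then show ?thesis by simp
next
  case False
  have "3 * (L Z * Q Z Z) = 0" using H[of Z Z Z] by simp
  then have zz: "Q Z Z = 0" using False by simp
  have zw: "Q Z W = 0" for W using H[of Z Z W] zz False Qsym[of W Z] by simp
  have ww: "Q W W = 0" for W using H[of W W Z] zw[of W] Qsym[of W Z] False by simp
  have "Q (X+Y) (X+Y) = Q X X + Q X Y + Q Y X + Q Y Y"
    using Qadd[of X Y "X+Y"] Qsym[of X "X+Y"] Qsym[of Y "X+Y"] Qadd[of X Y X] Qadd[of X Y Y]
      Qsym[of "X+Y" X] Qsym[of "X+Y" Y] Qsym[of X Y] by simp
  then have "Q X Y = 0" using ww[of "X+Y"] ww[of X] ww[of Y] Qsym[of X Y] by simp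
  then show ?thesis by simp
qed

lemma add0:
  fixes f :: "'v::ab_group_add \<Rightarrow> real"
  assumes "\<And>X Y. f (X+Y) = f X + f Y" shows "f 0 = 0"
  using assms[of 0 0] by simp



lemma core:
  fixes Pp Hh :: "'v::ab_group_add \<Rightarrow> 'v" and g :: "'v \<Rightarrow> 'v \<Rightarrow> real"
    and da db :: "'v \<Rightarrow> real" and N :: "'v \<Rightarrow> 'v \<Rightarrow> 'v \<Rightarrow> real" and c :: real
  assumes PP: "\<And>X. Pp (Pp X) = Pp X" and HH: "\<And>X. Hh (Hh X) = Hh X"
    and PH: "\<And>X. Pp (Hh X) = 0" and HP: "\<And>X. Hh (Pp X) = 0"
    and dec: "\<And>X. X = Pp X + Hh X"
    and Padd: "\<And>X Y. Pp (X+Y) = Pp X + Pp Y" and Hadd: "\<And>X Y. Hh (X+Y) = Hh X + Hh Y"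
    and gsym: "\<And>X Y. g X Y = g Y X" and gadd: "\<And>X Y Z. g (X+Y) Z = g X Z + g Y Z"
    and gPH: "\<And>X Y. g (Pp X) (Hh Y) = 0"
    and daadd: "\<And>X Y. da (X+Y) = da X + da Y" and dbadd: "\<And>X Y. db (X+Y) = db X + db Y"
    and Nadd1: "\<And>X X' Y Z. N (X+X') Y Z = N X Y Z + N X' Y Z"
    and Nadd2: "\<And>X Y Y' Z. N X (Y+Y') Z = N X Y Z + N X Y' Z"
    and Nsym: "\<And>X Y Z. N X Y Z = N X Z Y"
    and NPP: "\<And>X Y Z. N X (Pp Y) (Pp Z) = 0" and NHH: "\<And>X Y Z. N X (Hh Y) (Hh Z) = 0"
    and c: "c \<noteq> 0"
  defines "T \<equiv> \<lambda>X Y Z. da X * g Y (Pp Z) + db X * g Y (Hh Z) + c * N X Y Z"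
  shows "(\<forall>X Y Z. T X Y Z + T X Z Y + T Y X Z + T Y Z X + T Z X Y + T Z Y X = 0) \<longleftrightarrow>
     ((\<forall>X Y Z. c * (N (Pp X) (Hh Z) Y + N (Pp Y) (Hh Z) X) = - (g (Pp X) (Pp Y) * da Z)) \<and>
      (\<forall>X Y Z. c * (N (Hh X) (Pp Z) Y + N (Hh Y) (Pp Z) X) = - (g (Hh X) (Hh Y) * db Z)))"
proof -
  have gadd2: "g X (Y+Z) = g X Y + g X Z" for X Y Z using gadd gsym by metis
  have g0[simp]: "g X 0 = 0" "g 0 X = 0" for X
    using add0[of "g X"] gadd2[of X] add0[of "\<lambda>Y. g Y X"] gadd[of _ _ X] by auto
  have gHP[simp]: "g (Hh X) (Pp Y) = 0" for X Y using gPH gsym by metis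
  note gPH[simp] PP[simp] HH[simp] PH[simp] HP[simp] NPP[simp] NHH[simp]
  have N0[simp]: "N X 0 Z = 0" "N X Z 0 = 0" for X Z
    using add0[of "\<lambda>Y. N X Y Z"] Nadd2[of X _ _ Z] Nsym[of X 0 Z] by auto
  have Nred: "N X Y (Hh Z) = N X (Pp Y) (Hh Z)" for X Y Z
    using Nadd2[of X "Pp Y" "Hh Y" "Hh Z"] dec[of Y] by simp
  have Nred': "N X Y (Pp Z) = N X (Hh Y) (Pp Z)" for X Y Z
    using Nadd2[of X "Pp Y" "Hh Y" "Pp Z"] dec[of Y] by simp
  have daS: "da Z = da (Pp Z) + da (Hh Z)" for Z using daadd dec by metis
  have dbS: "db Z = db (Pp Z) + db (Hh Z)" for Z using dbadd dec by metis
  let ?S = "\<lambda>X Y Z. T X Y Z + T X Z Y + T Y X Z + T Y Z X + T Z X Y + T Z Y X"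
  show ?thesis
  proof
    assume A: "\<forall>X Y Z. ?S X Y Z = 0"
    have vvv: "da (Pp X) * g (Pp Y) (Pp Z) + da (Pp Y) * g (Pp X) (Pp Z) + da (Pp Z) * g (Pp X) (Pp Y) = 0" for X Y Z
      using A[rule_format, of "Pp X" "Pp Y" "Pp Z"] gsym[of "Pp X" "Pp Y"] gsym[of "Pp X" "Pp Z"] gsym[of "Pp Y" "Pp Z"]
      unfolding T_def by simp
    have aV: "da (Pp Z) * g (Pp X) (Pp Y) = 0" for X Y Z
      by (rule polar[of "\<lambda>X Y. g (Pp X) (Pp Y)" "\<lambda>W. da (Pp W)"]) (use gsym gadd Padd vvv in auto)
    have hhh: "db (Hh X) * g (Hh Y) (Hh Z) + db (Hh Y) * g (Hh X) (Hh Z) + db (Hh Z) * g (Hh X) (Hh Y) = 0" for X Y Z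
      using A[rule_format, of "Hh X" "Hh Y" "Hh Z"] gsym[of "Hh X" "Hh Y"] gsym[of "Hh X" "Hh Z"] gsym[of "Hh Y" "Hh Z"]
      unfolding T_def by simp
    have aH: "db (Hh Z) * g (Hh X) (Hh Y) = 0" for X Y Z
      by (rule polar[of "\<lambda>X Y. g (Hh X) (Hh Y)" "\<lambda>W. db (Hh W)"]) (use gsym gadd Hadd hhh in auto)
    have vvh: "2 * c * (N (Pp X) (Pp Y) (Hh Z) + N (Pp Y) (Pp X) (Hh Z)) + 2 * da (Hh Z) * g (Pp X) (Pp Y) = 0" for X Y Z
      using A[rule_format, of "Pp X" "Pp Y" "Hh Z"] gsym[of "Pp X" "Pp Y"]
        Nsym[of "Pp X" "Hh Z" "Pp Y"] Nsym[of "Pp Y" "Hh Z" "Pp X"]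
      unfolding T_def by (simp add: algebra_simps)
    have hhv: "2 * c * (N (Hh X) (Hh Y) (Pp Z) + N (Hh Y) (Hh X) (Pp Z)) + 2 * db (Pp Z) * g (Hh X) (Hh Y) = 0" for X Y Z
      using A[rule_format, of "Hh X" "Hh Y" "Pp Z"] gsym[of "Hh X" "Hh Y"]
        Nsym[of "Hh X" "Pp Z" "Hh Y"] Nsym[of "Hh Y" "Pp Z" "Hh X"]
      unfolding T_def by (simp add: algebra_simps)
    show "(\<forall>X Y Z. c * (N (Pp X) (Hh Z) Y + N (Pp Y) (Hh Z) X) = - (g (Pp X) (Pp Y) * da Z)) \<and>
      (\<forall>X Y Z. c * (N (Hh X) (Pp Z) Y + N (Hh Y) (Pp Z) X) = - (g (Hh X) (Hh Y) * db Z))"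
    proof (intro conjI allI)
      fix X Y Z
      show "c * (N (Pp X) (Hh Z) Y + N (Pp Y) (Hh Z) X) = - (g (Pp X) (Pp Y) * da Z)"
        using vvh[of X Y Z] aV[of Z X Y] daS[of Z] Nsym[of "Pp X" "Hh Z" Y] Nsym[of "Pp Y" "Hh Z" X]
          Nred[of "Pp X" Y Z] Nred[of "Pp Y" X Z]
        by algebra
      show "c * (N (Hh X) (Pp Z) Y + N (Hh Y) (Pp Z) X) = - (g (Hh X) (Hh Y) * db Z)"
        using hhv[of X Y Z] aH[of Z X Y] dbS[of Z] Nsym[of "Hh X" "Pp Z" Y] Nsym[of "Hh Y" "Pp Z" X]
          Nred'[of "Hh X" Y Z] Nred'[of "Hh Y" X Z]
        by algebra
    qed
  next
    assume B: "(\<forall>X Y Z. c * (N (Pp X) (Hh Z) Y + N (Pp Y) (Hh Z) X) = - (g (Pp X) (Pp Y) * da Z)) \<and>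
      (\<forall>X Y Z. c * (N (Hh X) (Pp Z) Y + N (Hh Y) (Pp Z) X) = - (g (Hh X) (Hh Y) * db Z))"
    have BV: "\<And>X Y Z. c * (N (Pp X) (Hh Z) Y + N (Pp Y) (Hh Z) X) = - (g (Pp X) (Pp Y) * da Z)"
      using B by blast
    have BH: "\<And>X Y Z. c * (N (Hh X) (Pp Z) Y + N (Hh Y) (Pp Z) X) = - (g (Hh X) (Hh Y) * db Z)"
      using B by blast
    have aV: "da (Pp Z) * g (Pp X) (Pp Y) = 0" for X Y Z
      using BV[where X=X and Y=Y and Z="Pp Z"] by (simp add: mult.commute)
    have aH: "db (Hh Z) * g (Hh X) (Hh Y) = 0" for X Y Z
      using BH[where X=X and Y=Y and Z="Hh Z"] by (simp add: mult.commute)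
    have CV: "c * N (Pp X) (Pp Y) (Hh Z) + c * N (Pp Y) (Pp X) (Hh Z) = - (g (Pp X) (Pp Y) * da (Hh Z))" for X Y Z
      using BV[where X=X and Y=Y and Z=Z] aV[of Z X Y] daS[of Z] Nsym[of "Pp X" "Hh Z" Y] Nsym[of "Pp Y" "Hh Z" X]
          Nred[of "Pp X" Y Z] Nred[of "Pp Y" X Z]
      by algebra
    have CH: "c * N (Hh X) (Hh Y) (Pp Z) + c * N (Hh Y) (Hh X) (Pp Z) = - (g (Hh X) (Hh Y) * db (Pp Z))" for X Y Z
      using BH[where X=X and Y=Y and Z=Z] aH[of Z X Y] dbS[of Z] Nsym[of "Hh X" "Pp Z" Y] Nsym[of "Hh Y" "Pp Z" X]
          Nred'[of "Hh X" Y Z] Nred'[of "Hh Y" X Z]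
      by algebra
    have Nexp: "N X Y Z = N (Pp X) (Pp Y) (Hh Z) + N (Pp X) (Pp Z) (Hh Y) + N (Hh X) (Hh Y) (Pp Z) + N (Hh X) (Hh Z) (Pp Y)" for X Y Z
    proof -
      have "N X Y Z = N (Pp X) Y Z + N (Hh X) Y Z" using Nadd1 dec by metis
      moreover have "N A Y Z = N A (Pp Y) Z + N A (Hh Y) Z" for A using Nadd2 dec by metis
      moreover have "N A (Pp Y) Z = N A (Pp Y) (Hh Z)" for A
        using Nred[of A "Pp Y" Z] Nsym[of A "Pp Y" Z] Nsym[of A Z "Hh Z"] Nred[of A Z Y] 
        by (metis Nadd2 NPP add_0 dec Nsym)
      moreover have "N A (Hh Y) Z = N A (Hh Y) (Pp Z)" for A
        by (metis Nadd2 NHH add_0_right dec Nsym)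
      ultimately show ?thesis using Nsym[of "Pp X" "Hh Y" "Pp Z"] Nsym[of "Hh X" "Pp Y" "Hh Z"] by simp
    qed
    have gexp1: "g Y (Pp Z) = g (Pp Y) (Pp Z)" for Y Z using gadd[of "Pp Y" "Hh Y" "Pp Z"] dec[of Y] by simp
    have gexp2: "g Y (Hh Z) = g (Hh Y) (Hh Z)" for Y Z using gadd[of "Pp Y" "Hh Y" "Hh Z"] dec[of Y] by simp
    have Texp: "T X Y Z = (da (Pp X) + da (Hh X)) * g (Pp Y) (Pp Z) + (db (Pp X) + db (Hh X)) * g (Hh Y) (Hh Z)
       + c * (N (Pp X) (Pp Y) (Hh Z) + N (Pp X) (Pp Z) (Hh Y) + N (Hh X) (Hh Y) (Pp Z) + N (Hh X) (Hh Z) (Pp Y))" for X Y Z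
      unfolding T_def using gexp1 gexp2 Nexp daS dbS by metis
    show "\<forall>X Y Z. ?S X Y Z = 0"
    proof (intro allI)
      fix X Y Z
      show "?S X Y Z = 0"
        unfolding Texp
        using CV[of X Y Z] CV[of X Z Y] CV[of Y Z X] CH[of X Y Z] CH[of X Z Y] CH[of Y Z X]
          aV[of X Y Z] aV[of Y X Z] aV[of Z X Y] aH[of X Y Z] aH[of Y X Z] aH[of Z X Y]
          gsym[of "Pp X" "Pp Y"] gsym[of "Pp X" "Pp Z"] gsym[of "Pp Y" "Pp Z"]
          gsym[of "Hh X" "Hh Y"] gsym[of "Hh X" "Hh Z"] gsym[of "Hh Y" "Hh Z"]
        by algebra
    qed
  qed
qed



lemma scaleR_mv: "((r::real) *\<^sub>R A) *v (w::real^'n) = r *\<^sub>R (A *v w)"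
  by (simp add: matrix_vector_mult_def vec_eq_iff sum_distrib_left algebra_simps)

lemma uminus_mv: "(- A) *v (w::real^'n) = - (A *v w)"
  by (simp add: matrix_vector_mult_def vec_eq_iff sum_negf)

lemma mv_uminus2: "(A::real^'n^'n) *v (- w) = - (A *v w)"
  by (metis diff_0 matrix_vector_mult_diff_distrib matrix_vector_mult_0_right)

lemma bilin_simps:
  fixes A B :: "real^'n^'n"
  shows "bilin A (u+v) w = bilin A u w + bilin A v w"
    "bilin A u (v+w) = bilin A u v + bilin A u w"
    "bilin A (u-v) w = bilin A u w - bilin A v w"
    "bilin A u (v-w) = bilin A u v - bilin A u w"
    "bilin A (r *\<^sub>R u) w = r * bilin A u w"
    "bilin A u (r *\<^sub>R w) = r * bilin A u w"
    "bilin A (-u) w = - bilin A u w"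
    "bilin A u (-w) = - bilin A u w"
    "bilin A 0 w = 0" "bilin A u 0 = 0"
    "bilin (A+B) u w = bilin A u w + bilin B u w"
    "bilin (A-B) u w = bilin A u w - bilin B u w"
    "bilin (r *\<^sub>R A) u w = r * bilin A u w"
    "bilin (-A) u w = - bilin A u w"
    "bilin (A ** B) u w = bilin A u (B *v w)"
  by (simp_all add: bilin_def algebra_simps inner_simps matrix_vector_mul_assoc scaleR_mv uminus_mv mv_uminus2)

lemma bilin_transpose: "bilin (transpose A) w u = bilin (A::real^'n^'n) u w"
  unfolding bilin_def
  by (metis dot_lmul_matrix inner_commute transpose_matrix_vector)

lemma bilin_sym: "transpose A = A \<Longrightarrow> bilin (A::real^'n^'n) u w = bilin A w u"
  by (metis bilin_transpose)

lemma inv_props: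
  fixes A :: "real^'n^'n"
  assumes "invertible A"
  shows "A ** matrix_inv A = mat 1" "matrix_inv A ** A = mat 1"
proof -
  have "\<exists>A'. A ** A' = mat 1 \<and> A' ** A = mat 1" using assms unfolding invertible_def by blast
  then have "A ** matrix_inv A = mat 1 \<and> matrix_inv A ** A = mat 1"
    unfolding matrix_inv_def by (rule someI_ex)
  then show "A ** matrix_inv A = mat 1" "matrix_inv A ** A = mat 1" by auto
qed

lemma lin_expand:
  fixes f :: "real^'n \<Rightarrow> real"
  assumes "linear f"
  shows "(\<Sum>l\<in>UNIV. W$l * f (axis l 1)) = f W"
proof -
  have "f W = f (\<Sum>l\<in>UNIV. W$l *\<^sub>R axis l 1)"
    using basis_expansion[of W] by (simp add: scalar_mult_eq_scaleR)
  also have "\<dots> = (\<Sum>l\<in>UNIV. W$l * f (axis l 1))"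
    using assms by (simp add: linear_sum linear_scale)
  finally show ?thesis by simp
qed

lemma inner_chi: "(W::real^'n) \<bullet> (\<chi> l. f l) = (\<Sum>l\<in>UNIV. W$l * f l)"
  by (simp add: inner_vec_def)

lemma koszul:
  fixes G :: "real^'n \<Rightarrow> real^'n^'n"
  assumes Gs: "transpose (G x) = G x" and Gi: "invertible (G x)" and lG: "linear (ddir G x)"
  shows "bilin (G x) (christoffel G x X Y) W =
     (1/2) * (bilin (ddir G x X) Y W + bilin (ddir G x Y) X W - bilin (ddir G x W) X Y)"
proof -
  let ?k = "\<chi> l. (1/2) * (bilin (ddir G x X) Y (axis l 1) + bilin (ddir G x Y) X (axis l 1)
       - bilin (ddir G x (axis l 1)) X Y)"
  have "bilin (G x) (christoffel G x X Y) W = bilin (G x) W (matrix_inv (G x) *v ?k)"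
    unfolding christoffel_def using bilin_sym[OF Gs] by metis
  also have "\<dots> = W \<bullet> ?k"
    unfolding bilin_def by (simp add: matrix_vector_mul_assoc inv_props[OF Gi])
  also have "\<dots> = (1/2) * ((\<Sum>l\<in>UNIV. W$l * bilin (ddir G x X) Y (axis l 1))
      + (\<Sum>l\<in>UNIV. W$l * bilin (ddir G x Y) X (axis l 1))
      - (\<Sum>l\<in>UNIV. W$l * bilin (ddir G x (axis l 1)) X Y))"
    unfolding inner_chi by (simp add: algebra_simps sum_distrib_left sum.distrib sum_subtractf)
  also have "\<dots> = (1/2) * (bilin (ddir G x X) Y W + bilin (ddir G x Y) X W - bilin (ddir G x W) X Y)"
  proof -
    have l1: "linear (\<lambda>W. bilin A u W)" for A u
      by (rule linearI) (simp_all add: bilin_simps)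
    have l2: "linear (\<lambda>W. bilin (ddir G x W) X Y)"
      by (rule linearI) (simp_all add: bilin_simps linear_add[OF lG] linear_scale[OF lG])
    show ?thesis using lin_expand[OF l1, of W "ddir G x X" Y] lin_expand[OF l1, of W "ddir G x Y" X] lin_expand[OF l2, of W] by simp
  qed
  finally show ?thesis .
qed

lemma nondeg:
  fixes A :: "real^'n^'n"
  assumes "invertible A" and "\<And>Z. bilin A u Z = bilin A w Z"
  shows "u = w"
proof -
  let ?Z = "matrix_inv A *v (u - w)"
  have "bilin A (u - w) ?Z = 0" using assms(2)[of ?Z] by (simp add: bilin_simps)
  then have "(u - w) \<bullet> (u - w) = 0"
    unfolding bilin_def by (simp add: matrix_vector_mul_assoc inv_props[OF assms(1)])
  then show ?thesis by simp
qed

lemma grad_pair: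
  fixes G :: "real^'n \<Rightarrow> real^'n^'n"
  assumes Gs: "transpose (G x) = G x" and Gi: "invertible (G x)" and lf: "linear (ddir f x)"
  shows "bilin (G x) (grad G f x) Z = ddir f x Z"
proof -
  have "bilin (G x) (grad G f x) Z = bilin (G x) Z (grad G f x)" using bilin_sym[OF Gs] by metis
  also have "\<dots> = Z \<bullet> (\<chi> i. ddir f x (axis i 1))"
    unfolding bilin_def grad_def by (simp add: matrix_vector_mul_assoc inv_props[OF Gi])
  also have "\<dots> = ddir f x Z" unfolding inner_chi by (rule lin_expand[OF lf])
  finally show ?thesis .
qed

lemma compat:
  fixes G :: "real^'n \<Rightarrow> real^'n^'n"
  assumes Gs: "transpose (G x) = G x" and Gi: "invertible (G x)" and lG: "linear (ddir G x)"
    and dGs: "transpose (ddir G x X) = ddir G x X"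
  shows "bilin (ddir G x X) Y W = bilin (G x) (christoffel G x X Y) W + bilin (G x) Y (christoffel G x X W)"
  using koszul[OF Gs Gi lG, of X Y W] koszul[OF Gs Gi lG, of X W Y] bilin_sym[OF Gs, of Y]
    bilin_sym[OF dGs, of Y W]
  by (simp add: algebra_simps)

lemma chr_lin:
  fixes G :: "real^'n \<Rightarrow> real^'n^'n"
  assumes Gs: "transpose (G x) = G x" and Gi: "invertible (G x)" and lG: "linear (ddir G x)"
  shows "christoffel G x X (W1 + W2) = christoffel G x X W1 + christoffel G x X W2"
    "christoffel G x (X1 + X2) W = christoffel G x X1 W + christoffel G x X2 W"
    "christoffel G x X (W1 - W2) = christoffel G x X W1 - christoffel G x X W2"
    "christoffel G x X 0 = 0"
proof -
  note k = koszul[OF Gs Gi lG]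
  note la = linear_add[OF lG] and ld = linear_diff[OF lG] and l0 = linear_0[OF lG]
  show "christoffel G x X (W1 + W2) = christoffel G x X W1 + christoffel G x X W2"
    by (rule nondeg[OF Gi]) (simp add: bilin_simps k la algebra_simps)
  show "christoffel G x (X1 + X2) W = christoffel G x X1 W + christoffel G x X2 W"
    by (rule nondeg[OF Gi]) (simp add: bilin_simps k la algebra_simps)
  show "christoffel G x X (W1 - W2) = christoffel G x X W1 - christoffel G x X W2"
    by (rule nondeg[OF Gi]) (simp add: bilin_simps k ld algebra_simps)
  show "christoffel G x X 0 = 0"
    by (rule nondeg[OF Gi]) (simp add: bilin_simps k l0 bilin_def[of 0])
qed



lemma pointwise:
  fixes G P :: "real^'n \<Rightarrow> real^'n^'n" and \<alpha> \<beta> :: "real^'n \<Rightarrow> real" and x :: "real^'n"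
  assumes Gs: "transpose (G x) = G x" and Gi: "invertible (G x)"
    and PP: "P x ** P x = P x" and GPs: "transpose (G x ** P x) = G x ** P x"
    and lG: "linear (ddir G x)" and lP: "linear (ddir P x)"
    and la: "linear (ddir \<alpha> x)" and lb: "linear (ddir \<beta> x)"
    and dGs: "\<And>X. transpose (ddir G x X) = ddir G x X"
    and dPP: "\<And>X. ddir P x X ** P x + P x ** ddir P x X = ddir P x X"
    and dGPs: "\<And>X. transpose (ddir G x X ** P x + G x ** ddir P x X) = ddir G x X ** P x + G x ** ddir P x X"
    and dK: "\<And>X. ddir (\<lambda>x. \<alpha> x *\<^sub>R vtens G P x + \<beta> x *\<^sub>R htens G P x) x X =
        ddir \<alpha> x X *\<^sub>R (G x ** P x) + \<alpha> x *\<^sub>R (ddir G x X ** P x + G x ** ddir P x X)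
      + ddir \<beta> x X *\<^sub>R (G x ** hproj P x) + \<beta> x *\<^sub>R (ddir G x X ** hproj P x - G x ** ddir P x X)"
    and dPY: "\<And>Y W. ddir (\<lambda>z. P z *v Y) x W = ddir P x W *v Y"
    and dHY: "\<And>Y W. ddir (\<lambda>z. hproj P z *v Y) x W = - (ddir P x W *v Y)"
    and ab: "\<alpha> x \<noteq> \<beta> x"
  shows "(\<forall>X Y Z.
      cov_t2 G (\<lambda>x. \<alpha> x *\<^sub>R vtens G P x + \<beta> x *\<^sub>R htens G P x) x X Y Z
    + cov_t2 G (\<lambda>x. \<alpha> x *\<^sub>R vtens G P x + \<beta> x *\<^sub>R htens G P x) x X Z Y
    + cov_t2 G (\<lambda>x. \<alpha> x *\<^sub>R vtens G P x + \<beta> x *\<^sub>R htens G P x) x Y X Z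
    + cov_t2 G (\<lambda>x. \<alpha> x *\<^sub>R vtens G P x + \<beta> x *\<^sub>R htens G P x) x Y Z X
    + cov_t2 G (\<lambda>x. \<alpha> x *\<^sub>R vtens G P x + \<beta> x *\<^sub>R htens G P x) x Z X Y
    + cov_t2 G (\<lambda>x. \<alpha> x *\<^sub>R vtens G P x + \<beta> x *\<^sub>R htens G P x) x Z Y X = 0)
    \<longleftrightarrow> ((\<forall>X Y. Sv G P x X Y = ((1/2) * ginner G x (P x *v X) (P x *v Y)) *\<^sub>R ((1 / (\<beta> x - \<alpha> x)) *\<^sub>R grad G \<alpha> x))
       \<and> (\<forall>X Y. Sh G P x X Y = ((1/2) * ginner G x (hproj P x *v X) (hproj P x *v Y)) *\<^sub>R ((1 / (\<alpha> x - \<beta> x)) *\<^sub>R grad G \<beta> x)))"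
proof -
  define K where "K = (\<lambda>x. \<alpha> x *\<^sub>R vtens G P x + \<beta> x *\<^sub>R htens G P x)"
  define g where "g = (\<lambda>u w. bilin (G x) u w)"
  define Pm where "Pm = P x"
  define Hm where "Hm = hproj P x"
  define dP where "dP = ddir P x"
  define dG where "dG = ddir G x"
  define da where "da = ddir \<alpha> x"
  define db where "db = ddir \<beta> x"
  define \<Gamma> where "\<Gamma> = christoffel G x"
  define Dv where "Dv = (\<lambda>X Z. dP X *v Z + \<Gamma> X (Pm *v Z) - Pm *v \<Gamma> X Z)"
  define N where "N = (\<lambda>X Y Z. g Y (Dv X Z))"
  define c where "c = \<alpha> x - \<beta> x"
  have c0: "c \<noteq> 0" using ab c_def by simp
  note chr = chr_lin[OF Gs Gi lG, folded \<Gamma>_def]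
  have Hv: "Hm *v v = v - Pm *v v" for v by (simp add: Hm_def hproj_def Pm_def algebra_simps)
  have PPv: "Pm *v (Pm *v v) = Pm *v v" for v using PP by (simp add: matrix_vector_mul_assoc Pm_def)
  have PHv: "Pm *v (Hm *v v) = 0" for v by (simp add: Hv PPv algebra_simps)
  have HPv: "Hm *v (Pm *v v) = 0" for v by (simp add: Hv PPv)
  have HHv: "Hm *v (Hm *v v) = Hm *v v" for v by (simp add: Hv PPv algebra_simps)
  have dec: "v = Pm *v v + Hm *v v" for v by (simp add: Hv)
  have gsym: "g u w = g w u" for u w unfolding g_def by (rule bilin_sym[OF Gs])
  have gP: "g u (Pm *v w) = g (Pm *v u) w" for u w
  proof -
    have "g u (Pm *v w) = bilin (G x ** P x) u w" by (simp add: g_def bilin_simps Pm_def)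
    also have "\<dots> = bilin (G x ** P x) w u" by (rule bilin_sym[OF GPs])
    also have "\<dots> = g (Pm *v u) w" by (simp add: g_def bilin_simps Pm_def gsym[unfolded g_def])
    finally show ?thesis .
  qed
  have gH: "g u (Hm *v w) = g (Hm *v u) w" for u w
    using gP[of u w] by (simp add: Hv g_def bilin_simps gsym[unfolded g_def])
  have gadd: "g (u + v) w = g u w + g v w" for u v w by (simp add: g_def bilin_simps)
  have gadd2: "g w (u + v) = g w u + g w v" for u v w by (simp add: g_def bilin_simps)
  have gPH: "g (Pm *v u) (Hm *v w) = 0" for u w using gH[of "Pm *v u" w] by (simp add: HPv g_def bilin_simps)
  have cmp: "bilin (dG X) Y W = g (\<Gamma> X Y) W + g Y (\<Gamma> X W)" for X Y W
    unfolding dG_def g_def \<Gamma>_def by (rule compat[OF Gs Gi lG dGs])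
  \<comment> \<open>derivative of P facts\<close>
  have dPPv: "dP X *v (Pm *v v) + Pm *v (dP X *v v) = dP X *v v" for X v
    using arg_cong[OF dPP[of X], of "\<lambda>M. M *v v"]
    by (simp add: matrix_vector_mul_assoc[symmetric] matrix_vector_mult_add_rdistrib dP_def Pm_def)
  have PdPP: "Pm *v (dP X *v (Pm *v v)) = 0" for X v
    using dPPv[of X "Pm *v v"] by (simp add: PPv)
  have HdPH: "Hm *v (dP X *v (Hm *v v)) = 0" for X v
  proof -
    have "dP X *v (Hm *v v) = dP X *v v - dP X *v (Pm *v v)" by (simp add: Hv algebra_simps)
    then show ?thesis using dPPv[of X v] PdPP[of X v] by (simp add: Hv algebra_simps)
  qed
  \<comment> \<open>the covariant derivative formula\<close>
  have Kx: "K x = \<alpha> x *\<^sub>R (G x ** Pm) + \<beta> x *\<^sub>R (G x ** Hm)"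
    by (simp add: K_def vtens_def htens_def Pm_def Hm_def)
  have Tform: "cov_t2 G K x X Y Z = da X * g Y (Pm *v Z) + db X * g Y (Hm *v Z) + c * N X Y Z" for X Y Z
  proof -
    have e1: "cov_t2 G K x X Y Z =
        da X * g Y (Pm *v Z) + \<alpha> x * (bilin (dG X) Y (Pm *v Z) + g Y (dP X *v Z))
      + db X * g Y (Hm *v Z) + \<beta> x * (bilin (dG X) Y (Hm *v Z) - g Y (dP X *v Z))
      - (\<alpha> x * g (\<Gamma> X Y) (Pm *v Z) + \<beta> x * g (\<Gamma> X Y) (Hm *v Z))
      - (\<alpha> x * g Y (Pm *v \<Gamma> X Z) + \<beta> x * g Y (Hm *v \<Gamma> X Z))"
      unfolding cov_t2_def Kx dK[folded K_def]
      by (simp add: bilin_simps g_def Pm_def Hm_def dG_def dP_def da_def db_def \<Gamma>_def)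
    have h1: "g Y (Hm *v Z) = g Y Z - g Y (Pm *v Z)" by (simp add: Hv g_def bilin_simps)
    have h2: "bilin (dG X) Y (Hm *v Z) = bilin (dG X) Y Z - bilin (dG X) Y (Pm *v Z)" by (simp add: Hv bilin_simps)
    have h3: "g (\<Gamma> X Y) (Hm *v Z) = g (\<Gamma> X Y) Z - g (\<Gamma> X Y) (Pm *v Z)" by (simp add: Hv g_def bilin_simps)
    have h4: "g Y (Hm *v \<Gamma> X Z) = g Y (\<Gamma> X Z) - g Y (Pm *v \<Gamma> X Z)" by (simp add: Hv g_def bilin_simps)
    have e3: "N X Y Z = g Y (dP X *v Z) + g Y (\<Gamma> X (Pm *v Z)) - g Y (Pm *v \<Gamma> X Z)"
      by (simp add: N_def Dv_def g_def bilin_simps)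
    show ?thesis
      using e1 e3 cmp[of X Y "Pm *v Z"] cmp[of X Y Z] h1 h2 h3 h4 c_def
      by algebra
  qed
  have gscale: "g u (r *\<^sub>R w) = r * g u w" "g (r *\<^sub>R u) w = r * g u w" for u w r by (simp_all add: g_def bilin_simps)
  have gneg: "g u (- w) = - g u w" for u w by (simp add: g_def bilin_simps)
  have gdiff: "g u (v - w) = g u v - g u w" for u v w by (simp add: g_def bilin_simps)
  have g0: "g u 0 = 0" for u by (simp add: g_def bilin_simps)
  have lP': "linear dP" using lP dP_def by simp
  have Nadd1: "N (X1 + X2) Y Z = N X1 Y Z + N X2 Y Z" for X1 X2 Y Z
    by (simp add: N_def Dv_def linear_add[OF lP'] chr algebra_simps gadd2 gdiff)
  have Nadd2: "N X (Y1 + Y2) Z = N X Y1 Z + N X Y2 Z" for X Y1 Y2 Z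
    by (simp add: N_def gadd)
  have Nsym: "N X Y Z = N X Z Y" for X Y Z
  proof -
    have e3: "N X A B = g A (dP X *v B) + g A (\<Gamma> X (Pm *v B)) - g (Pm *v A) (\<Gamma> X B)" for A B
      by (simp add: N_def Dv_def gdiff gadd2 gP)
    have s: "bilin (dG X) A (Pm *v B) + g A (dP X *v B) = bilin (dG X) B (Pm *v A) + g B (dP X *v A)" for A B
      using bilin_sym[OF dGPs[of X], of A B]
      by (simp add: bilin_simps g_def dG_def dP_def Pm_def)
    show ?thesis
      using e3[of Y Z] e3[of Z Y] s[of Y Z] cmp[of X Y "Pm *v Z"] cmp[of X Z "Pm *v Y"]
        gsym[of "\<Gamma> X Y" "Pm *v Z"] gsym[of "\<Gamma> X Z" "Pm *v Y"]
      by algebra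
  qed
  have NPP: "N X (Pm *v Y) (Pm *v Z) = 0" for X Y Z
  proof -
    have "N X (Pm *v Y) (Pm *v Z) = g Y (Pm *v Dv X (Pm *v Z))" by (simp add: N_def gP)
    also have "Pm *v Dv X (Pm *v Z) = 0"
      by (simp add: Dv_def matrix_vector_right_distrib matrix_vector_mult_diff_distrib PPv PdPP)
    finally show ?thesis by (simp add: g0)
  qed
  have NHH: "N X (Hm *v Y) (Hm *v Z) = 0" for X Y Z
  proof -
    have "N X (Hm *v Y) (Hm *v Z) = g Y (Hm *v Dv X (Hm *v Z))" by (simp add: N_def gH)
    also have "Hm *v Dv X (Hm *v Z) = 0"
      by (simp add: Dv_def matrix_vector_right_distrib matrix_vector_mult_diff_distrib PHv HPv HdPH chr)
    finally show ?thesis by (simp add: g0)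
  qed
  have gQv: "g (Qv G P x X Y) Z = N (Pm *v X) (Hm *v Z) Y" for X Y Z
  proof -
    have q: "Qv G P x X Y = Hm *v (dP (Pm *v X) *v Y + \<Gamma> (Pm *v X) (Pm *v Y))"
      by (simp add: Qv_def cov_vf_def dPY Pm_def Hm_def dP_def \<Gamma>_def)
    have "Hm *v Dv (Pm *v X) Y = Hm *v (dP (Pm *v X) *v Y + \<Gamma> (Pm *v X) (Pm *v Y))"
      by (simp add: Dv_def matrix_vector_right_distrib matrix_vector_mult_diff_distrib HPv)
    then show ?thesis unfolding q N_def using gH gsym by metis
  qed
  have gQh: "g (Qh G P x X Y) Z = - N (Hm *v X) (Pm *v Z) Y" for X Y Z
  proof -
    have q: "Qh G P x X Y = Pm *v (- (dP (Hm *v X) *v Y) + \<Gamma> (Hm *v X) (Hm *v Y))"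
      by (simp add: Qh_def cov_vf_def dHY Pm_def Hm_def dP_def \<Gamma>_def)
    have "- (Pm *v Dv (Hm *v X) Y) = Pm *v (- (dP (Hm *v X) *v Y) + \<Gamma> (Hm *v X) (Hm *v Y))"
      by (simp add: Dv_def matrix_vector_right_distrib matrix_vector_mult_diff_distrib mv_uminus2 PPv Hv chr)
    then have "Qh G P x X Y = - (Pm *v Dv (Hm *v X) Y)" using q by simp
    then show ?thesis unfolding N_def using gP gsym gneg by metis
  qed
  have gSv: "g (Sv G P x X Y) Z = 1/2 * (N (Pm *v X) (Hm *v Z) Y + N (Pm *v Y) (Hm *v Z) X)" for X Y Z
    by (simp add: Sv_def gscale gadd gQv)
  have gSh: "g (Sh G P x X Y) Z = 1/2 * (- N (Hm *v X) (Pm *v Z) Y - N (Hm *v Y) (Pm *v Z) X)" for X Y Z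
    by (simp add: Sh_def gscale gadd gQh)
  have gga: "g (grad G \<alpha> x) Z = da Z" for Z using grad_pair[of G x \<alpha>, OF Gs Gi la] g_def da_def by simp
  have ggb: "g (grad G \<beta> x) Z = db Z" for Z using grad_pair[of G x \<beta>, OF Gs Gi lb] g_def db_def by simp
  have gi: "ginner G x = g" by (simp add: ginner_def g_def fun_eq_iff)
  have vec_iff: "u = w \<longleftrightarrow> (\<forall>Z. g u Z = g w Z)" for u w
    using nondeg[OF Gi, of u w] g_def by auto
  have ar: "(1/2 * A = (1/2 * q) * ((1 / (- c)) * d)) \<longleftrightarrow> (c * A = - (q * d))" for A q d
    using c0 by (auto simp: field_simps)
  have ar2: "(1/2 * (- A - B) = (1/2 * q) * ((1 / c) * d)) \<longleftrightarrow> (c * (A + B) = - (q * d))" for A B q d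
    using c0 by (auto simp: field_simps)
  have SvI: "(\<forall>X Y. Sv G P x X Y = ((1/2) * ginner G x (P x *v X) (P x *v Y)) *\<^sub>R ((1 / (\<beta> x - \<alpha> x)) *\<^sub>R grad G \<alpha> x))
     \<longleftrightarrow> (\<forall>X Y Z. c * (N (Pm *v X) (Hm *v Z) Y + N (Pm *v Y) (Hm *v Z) X) = - (g (Pm *v X) (Pm *v Y) * da Z))"
  proof -
    have e: "\<beta> x - \<alpha> x = - c" using c_def by simp
    show ?thesis
      unfolding vec_iff gi Pm_def[symmetric] gSv gscale gga e ar by blast
  qed
  have ShI: "(\<forall>X Y. Sh G P x X Y = ((1/2) * ginner G x (hproj P x *v X) (hproj P x *v Y)) *\<^sub>R ((1 / (\<alpha> x - \<beta> x)) *\<^sub>R grad G \<beta> x))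
     \<longleftrightarrow> (\<forall>X Y Z. c * (N (Hm *v X) (Pm *v Z) Y + N (Hm *v Y) (Pm *v Z) X) = - (g (Hm *v X) (Hm *v Y) * db Z))"
  proof -
    have e: "\<alpha> x - \<beta> x = c" using c_def by simp
    show ?thesis
      unfolding vec_iff gi Hm_def[symmetric] gSh gscale ggb e ar2 by blast
  qed
  have Padd: "Pm *v (X + Y) = Pm *v X + Pm *v Y" for X Y by (simp add: matrix_vector_right_distrib)
  have Hadd: "Hm *v (X + Y) = Hm *v X + Hm *v Y" for X Y by (simp add: matrix_vector_right_distrib)
  have daadd: "da (X + Y) = da X + da Y" for X Y using linear_add[OF la] da_def by simp
  have dbadd: "db (X + Y) = db X + db Y" for X Y using linear_add[OF lb] db_def by simp
  note C = core[where Pp="(*v) Pm" and Hh="(*v) Hm" and g=g and da=da and db=db and N=N and c=c,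
      OF PPv HHv PHv HPv dec Padd Hadd gsym gadd gPH daadd dbadd Nadd1 Nadd2 Nsym NPP NHH c0]
  show ?thesis
    unfolding K_def[symmetric] Tform SvI ShI using C by simp
qed



lemma ddir_eta: "ddir F x = frechet_derivative F (at x)"
  by (simp add: fun_eq_iff ddir_def)

lemma hasD: "F differentiable at x \<Longrightarrow> (F has_derivative ddir F x) (at x)"
  unfolding ddir_eta by (rule frechet_derivative_works[THEN iffD1])

lemma deriv_unique_open:
  assumes "(f has_derivative f') (at x)" "open U" "x \<in> U" "\<And>z. z \<in> U \<Longrightarrow> f z = h z"
  shows "ddir h x = f'"
proof -
  have "(h has_derivative f') (at x)" by (rule has_derivative_transform_within_open[OF assms])
  then show ?thesis unfolding ddir_eta by (metis frechet_derivative_at)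
qed

lemma deriv_facts:
  fixes G P :: "real^'n \<Rightarrow> real^'n^'n" and \<alpha> \<beta> :: "real^'n \<Rightarrow> real"
  assumes U: "open U" "x \<in> U"
    and sG0: "\<forall>z\<in>U. transpose (G z) = G z"
    and sP0: "\<forall>z\<in>U. P z ** P z = P z"
    and sGP0: "\<forall>z\<in>U. transpose (G z ** P z) = G z ** P z"
    and dG: "G differentiable at x" and dP: "P differentiable at x"
    and da: "\<alpha> differentiable at x" and db: "\<beta> differentiable at x"
  shows "linear (ddir G x)" "linear (ddir P x)" "linear (ddir \<alpha> x)" "linear (ddir \<beta> x)"
    "\<And>X. transpose (ddir G x X) = ddir G x X"
    "\<And>X. ddir P x X ** P x + P x ** ddir P x X = ddir P x X"
    "\<And>X. transpose (ddir G x X ** P x + G x ** ddir P x X) = ddir G x X ** P x + G x ** ddir P x X"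
    "\<And>X. ddir (\<lambda>x. \<alpha> x *\<^sub>R vtens G P x + \<beta> x *\<^sub>R htens G P x) x X =
        ddir \<alpha> x X *\<^sub>R (G x ** P x) + \<alpha> x *\<^sub>R (ddir G x X ** P x + G x ** ddir P x X)
      + ddir \<beta> x X *\<^sub>R (G x ** hproj P x) + \<beta> x *\<^sub>R (ddir G x X ** hproj P x - G x ** ddir P x X)"
    "\<And>Y W. ddir (\<lambda>z. P z *v Y) x W = ddir P x W *v Y"
    "\<And>Y W. ddir (\<lambda>z. hproj P z *v Y) x W = - (ddir P x W *v Y)"
proof -
  have sG: "transpose (G z) = G z" if "z \<in> U" for z using sG0 that by blast
  have sP: "P z ** P z = P z" if "z \<in> U" for z using sP0 that by blast
  have sGP: "transpose (G z ** P z) = G z ** P z" if "z \<in> U" for z using sGP0 that by blast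
  show "linear (ddir G x)" "linear (ddir P x)" "linear (ddir \<alpha> x)" "linear (ddir \<beta> x)"
    unfolding ddir_eta using linear_frechet_derivative dG dP da db by auto
  note hG = hasD[OF dG] and hP = hasD[OF dP] and ha = hasD[OF da] and hb = hasD[OF db]
  note mmD = bounded_bilinear.FDERIV[OF mm_bbl]
  have t: "ddir G x = (\<lambda>h. transpose (ddir G x h))"
    by (rule deriv_unique_open[OF bounded_linear.has_derivative[OF transpose_bl hG] U]) (simp add: sG)
  show "transpose (ddir G x X) = ddir G x X" for X using fun_cong[OF t, of X] by simp
  have p: "ddir P x = (\<lambda>h. P x ** ddir P x h + ddir P x h ** P x)"
    by (rule deriv_unique_open[OF mmD[OF hP hP] U]) (simp add: sP)
  show "ddir P x X ** P x + P x ** ddir P x X = ddir P x X" for X using fun_cong[OF p, of X] by (simp add: add.commute)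
  have gp1: "ddir (\<lambda>z. G z ** P z) x = (\<lambda>h. G x ** ddir P x h + ddir G x h ** P x)"
    by (rule deriv_unique_open[OF mmD[OF hG hP] U]) simp
  have gp2: "ddir (\<lambda>z. G z ** P z) x = (\<lambda>h. transpose (G x ** ddir P x h + ddir G x h ** P x))"
    by (rule deriv_unique_open[OF bounded_linear.has_derivative[OF transpose_bl mmD[OF hG hP]] U]) (simp add: sGP)
  show "transpose (ddir G x X ** P x + G x ** ddir P x X) = ddir G x X ** P x + G x ** ddir P x X" for X
    using fun_cong[OF gp1, of X] fun_cong[OF gp2, of X] by (simp add: add.commute)
  have hH: "(hproj P has_derivative (\<lambda>h. 0 - ddir P x h)) (at x)"
    unfolding hproj_def by (intro has_derivative_diff has_derivative_const hP)
  have k: "ddir (\<lambda>x. \<alpha> x *\<^sub>R vtens G P x + \<beta> x *\<^sub>R htens G P x) x =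
     (\<lambda>h. (\<alpha> x *\<^sub>R (G x ** ddir P x h + ddir G x h ** P x) + ddir \<alpha> x h *\<^sub>R (G x ** P x))
        + (\<beta> x *\<^sub>R (G x ** (0 - ddir P x h) + ddir G x h ** hproj P x) + ddir \<beta> x h *\<^sub>R (G x ** hproj P x)))"
    unfolding vtens_def htens_def
    by (rule deriv_unique_open[OF has_derivative_add[OF has_derivative_scaleR[OF ha mmD[OF hG hP]]
          has_derivative_scaleR[OF hb mmD[OF hG hH]]] U]) simp
  show "ddir (\<lambda>x. \<alpha> x *\<^sub>R vtens G P x + \<beta> x *\<^sub>R htens G P x) x X =
        ddir \<alpha> x X *\<^sub>R (G x ** P x) + \<alpha> x *\<^sub>R (ddir G x X ** P x + G x ** ddir P x X)
      + ddir \<beta> x X *\<^sub>R (G x ** hproj P x) + \<beta> x *\<^sub>R (ddir G x X ** hproj P x - G x ** ddir P x X)" for X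
    unfolding k by (simp add: bounded_bilinear.diff_right[OF mm_bbl] bounded_bilinear.zero_right[OF mm_bbl] bounded_bilinear.minus_right[OF mm_bbl] algebra_simps)
  show "ddir (\<lambda>z. P z *v Y) x W = ddir P x W *v Y" for Y W
  proof -
    have "ddir (\<lambda>z. P z *v Y) x = (\<lambda>h. ddir P x h *v Y)"
      by (rule deriv_unique_open[OF bounded_linear.has_derivative[OF mv_bl hP] U]) simp
    then show ?thesis by simp
  qed
  show "ddir (\<lambda>z. hproj P z *v Y) x W = - (ddir P x W *v Y)" for Y W
  proof -
    have "ddir (\<lambda>z. hproj P z *v Y) x = (\<lambda>h. (0 - ddir P x h) *v Y)"
      by (rule deriv_unique_open[OF bounded_linear.has_derivative[OF mv_bl hH] U]) simp
    then show ?thesis by (simp add: uminus_mv)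
  qed
qed

theorem proposition2:
  fixes G P :: "real^'n \<Rightarrow> real^'n^'n"
    and \<alpha> \<beta> :: "real^'n \<Rightarrow> real"
    and U :: "(real^'n) set" and p :: nat
  assumes "open U"
    and "\<forall>x\<in>U. transpose (G x) = G x \<and> invertible (G x)"
    and "\<forall>x\<in>U. P x ** P x = P x \<and> transpose (G x ** P x) = G x ** P x \<and> rank (P x) = p"
    and "\<forall>x\<in>U. G differentiable at x \<and> P differentiable at x
               \<and> \<alpha> differentiable at x \<and> \<beta> differentiable at x"
    and "\<forall>x\<in>U. \<alpha> x \<noteq> \<beta> x"
  shows "killing G (\<lambda>x. \<alpha> x *\<^sub>R vtens G P x + \<beta> x *\<^sub>R htens G P x) U
     \<longleftrightarrow> (\<exists>a b :: real^'n \<Rightarrow> real^'n. \<forall>x\<in>U.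
            (\<forall>X Y. Sv G P x X Y = ((1/2) * ginner G x (P x *v X) (P x *v Y)) *\<^sub>R a x)
          \<and> (\<forall>X Y. Sh G P x X Y = ((1/2) * ginner G x (hproj P x *v X) (hproj P x *v Y)) *\<^sub>R b x)
          \<and> a x = (1 / (\<beta> x - \<alpha> x)) *\<^sub>R grad G \<alpha> x
          \<and> b x = (1 / (\<alpha> x - \<beta> x)) *\<^sub>R grad G \<beta> x)"
proof -
  have pw: "(\<forall>X Y Z.
      cov_t2 G (\<lambda>x. \<alpha> x *\<^sub>R vtens G P x + \<beta> x *\<^sub>R htens G P x) x X Y Z
    + cov_t2 G (\<lambda>x. \<alpha> x *\<^sub>R vtens G P x + \<beta> x *\<^sub>R htens G P x) x X Z Y
    + cov_t2 G (\<lambda>x. \<alpha> x *\<^sub>R vtens G P x + \<beta> x *\<^sub>R htens G P x) x Y X Z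
    + cov_t2 G (\<lambda>x. \<alpha> x *\<^sub>R vtens G P x + \<beta> x *\<^sub>R htens G P x) x Y Z X
    + cov_t2 G (\<lambda>x. \<alpha> x *\<^sub>R vtens G P x + \<beta> x *\<^sub>R htens G P x) x Z X Y
    + cov_t2 G (\<lambda>x. \<alpha> x *\<^sub>R vtens G P x + \<beta> x *\<^sub>R htens G P x) x Z Y X = 0)
    \<longleftrightarrow> ((\<forall>X Y. Sv G P x X Y = ((1/2) * ginner G x (P x *v X) (P x *v Y)) *\<^sub>R ((1 / (\<beta> x - \<alpha> x)) *\<^sub>R grad G \<alpha> x))
       \<and> (\<forall>X Y. Sh G P x X Y = ((1/2) * ginner G x (hproj P x *v X) (hproj P x *v Y)) *\<^sub>R ((1 / (\<alpha> x - \<beta> x)) *\<^sub>R grad G \<beta> x)))"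
    if x: "x \<in> U" for x
  proof -
    have sG: "\<forall>z\<in>U. transpose (G z) = G z" using assms(2) by blast
    have sP: "\<forall>z\<in>U. P z ** P z = P z" using assms(3) by blast
    have sGP: "\<forall>z\<in>U. transpose (G z ** P z) = G z ** P z" using assms(3) by blast
    note D = deriv_facts[where G=G and P=P and \<alpha>=\<alpha> and \<beta>=\<beta>, OF assms(1) x sG sP sGP]
    have d: "G differentiable at x" "P differentiable at x" "\<alpha> differentiable at x" "\<beta> differentiable at x"
      using assms(4) x by auto
    show ?thesis
      by (rule pointwise[OF sG[rule_format, OF x] _ sP[rule_format, OF x] sGP[rule_format, OF x] D[OF d]])
        (use assms(2,5) x in auto)
  qed
  show ?thesis
  proof
    assume k: "killing G (\<lambda>x. \<alpha> x *\<^sub>R vtens G P x + \<beta> x *\<^sub>R htens G P x) U"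
    show "\<exists>a b :: real^'n \<Rightarrow> real^'n. \<forall>x\<in>U.
            (\<forall>X Y. Sv G P x X Y = ((1/2) * ginner G x (P x *v X) (P x *v Y)) *\<^sub>R a x)
          \<and> (\<forall>X Y. Sh G P x X Y = ((1/2) * ginner G x (hproj P x *v X) (hproj P x *v Y)) *\<^sub>R b x)
          \<and> a x = (1 / (\<beta> x - \<alpha> x)) *\<^sub>R grad G \<alpha> x
          \<and> b x = (1 / (\<alpha> x - \<beta> x)) *\<^sub>R grad G \<beta> x"
      apply (rule exI[of _ "\<lambda>x. (1 / (\<beta> x - \<alpha> x)) *\<^sub>R grad G \<alpha> x"])
      apply (rule exI[of _ "\<lambda>x. (1 / (\<alpha> x - \<beta> x)) *\<^sub>R grad G \<beta> x"])
      using k pw unfolding killing_def by blast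
  next
    assume "\<exists>a b :: real^'n \<Rightarrow> real^'n. \<forall>x\<in>U.
            (\<forall>X Y. Sv G P x X Y = ((1/2) * ginner G x (P x *v X) (P x *v Y)) *\<^sub>R a x)
          \<and> (\<forall>X Y. Sh G P x X Y = ((1/2) * ginner G x (hproj P x *v X) (hproj P x *v Y)) *\<^sub>R b x)
          \<and> a x = (1 / (\<beta> x - \<alpha> x)) *\<^sub>R grad G \<alpha> x
          \<and> b x = (1 / (\<alpha> x - \<beta> x)) *\<^sub>R grad G \<beta> x"
    then obtain a b where ab: "\<forall>x\<in>U.
            (\<forall>X Y. Sv G P x X Y = ((1/2) * ginner G x (P x *v X) (P x *v Y)) *\<^sub>R a x)
          \<and> (\<forall>X Y. Sh G P x X Y = ((1/2) * ginner G x (hproj P x *v X) (hproj P x *v Y)) *\<^sub>R b x)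
          \<and> a x = (1 / (\<beta> x - \<alpha> x)) *\<^sub>R grad G \<alpha> x
          \<and> b x = (1 / (\<alpha> x - \<beta> x)) *\<^sub>R grad G \<beta> x" by blast
    show "killing G (\<lambda>x. \<alpha> x *\<^sub>R vtens G P x + \<beta> x *\<^sub>R htens G P x) U"
      unfolding killing_def
    proof
      fix x assume x: "x \<in> U"
      have "(\<forall>X Y. Sv G P x X Y = ((1/2) * ginner G x (P x *v X) (P x *v Y)) *\<^sub>R ((1 / (\<beta> x - \<alpha> x)) *\<^sub>R grad G \<alpha> x))
       \<and> (\<forall>X Y. Sh G P x X Y = ((1/2) * ginner G x (hproj P x *v X) (hproj P x *v Y)) *\<^sub>R ((1 / (\<alpha> x - \<beta> x)) *\<^sub>R grad G \<beta> x))"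
        using ab x by metis
      then show "\<forall>X Y Z.
      cov_t2 G (\<lambda>x. \<alpha> x *\<^sub>R vtens G P x + \<beta> x *\<^sub>R htens G P x) x X Y Z
    + cov_t2 G (\<lambda>x. \<alpha> x *\<^sub>R vtens G P x + \<beta> x *\<^sub>R htens G P x) x X Z Y
    + cov_t2 G (\<lambda>x. \<alpha> x *\<^sub>R vtens G P x + \<beta> x *\<^sub>R htens G P x) x Y X Z
    + cov_t2 G (\<lambda>x. \<alpha> x *\<^sub>R vtens G P x + \<beta> x *\<^sub>R htens G P x) x Y Z X
    + cov_t2 G (\<lambda>x. \<alpha> x *\<^sub>R vtens G P x + \<beta> x *\<^sub>R htens G P x) x Z X Y
    + cov_t2 G (\<lambda>x. \<alpha> x *\<^sub>R vtens G P x + \<beta> x *\<^sub>R htens G P x) x Z Y X = 0"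
        using pw[OF x] by blast
    qed
  qed
qed

end
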